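(* Let $\mathcal E$ be an exact category. The assignments $\mathcal S\mapsto \mathsf M_{\mathcal S}:=\{[X]\in\mathsf M(\mathcal E)\mid X\in\mathcal S\}$ and $F\mapsto \mathcal D_F:=\{X\in\mathcal E\mid [X]\in F\}$ are mutually inverse inclusion-preserving bijections between $\operatorname{Serre}(\mathcal E)$ and $\operatorname{Face}(\mathsf M(\mathcal E))$, and $F\mapsto \mathsf M(\mathcal E)\setminus F$ is an inclusion-reversing bijection from $\operatorname{Face}(\mathsf M(\mathcal E))$ to $\operatorname{MSpec}\mathsf M(\mathcal E)$. Hence there are bijections between $\operatorname{Serre}(\mathcal E)$, $\operatorname{Face}(\mathsf M(\mathcal E))$ and $\operatorname{MSpec}\mathsf M(\mathcal E)$.
   Context: All categories are skeletally small and subcategories are full and closed under isomorphisms; $|\mathcal C|$ is the set of isomorphism classes of objects. An exact category $\mathcal E$ is an additive full subcategory of an abelian category $\mathcal A$ closed under extensions; a conflation in $\mathcal E$ is a short exact sequence $0\to X\to Y\to Z\to0$ in $\mathcal A$ with $X,Y,Z\in\mathcal E$. Monoids are commutative, written additively. The Grothendieck monoid $\mathsf M(\mathcal E)$ is a monoid with a map $|\mathcal E|\to\mathsf M(\mathcal E)$, $X\mapsto[X]$, with $[0]=0$ and $[Y]=[X]+[Z]$ for every conflation, universal among such maps to monoids. A Serre subcategory of $\mathcal E$ is an additive subcategory $\mathcal S$ such that for every conflation $0\to X\to Y\to Z\to0$, $Y\in\mathcal S$ iff $X,Z\in\mathcal S$; $\operatorname{Serre}(\mathcal E)$ is the set of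 these. A face of a monoid $M$ is a submonoid $F$ with $x+y\in F$ iff $x\in F$ and $y\in F$; $\operatorname{Face}(M)$ is the set of faces. A prime ideal of $M$ is a subset $\mathfrak p\ne M$ with $x+a\in\mathfrak p$ whenever $x\in\mathfrak p$, $a\in M$, and such that $x+y\in\mathfrak p$ implies $x\in\mathfrak p$ or $y\in\mathfrak p$; $\operatorname{MSpec}M$ is the set of prime ideals. *)

theory Defs
  imports Main "HOL-Library.Multiset"
begin

record ('o, 'm) acat =
  Ob    :: "'o set"
  Ar    :: "'m set"
  dom   :: "'m \<Rightarrow> 'o"
  cod   :: "'m \<Rightarrow> 'o"
  cmp   :: "'m \<Rightarrow> 'm \<Rightarrow> 'm"   (* cmp C g f = g o f *)
  idt   :: "'o \<Rightarrow> 'm"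
  madd  :: "'m \<Rightarrow> 'm \<Rightarrow> 'm"
  mzero :: "'o \<Rightarrow> 'o \<Rightarrow> 'm"

definition hom :: "('o,'m) acat \<Rightarrow> 'o \<Rightarrow> 'o \<Rightarrow> 'm set" where
  "hom C X Y = {f \<in> Ar C. dom C f = X \<and> cod C f = Y}"

definition category :: "('o,'m) acat \<Rightarrow> bool" where
  "category C \<longleftrightarrow>
     (\<forall>f\<in>Ar C. dom C f \<in> Ob C \<and> cod C f \<in> Ob C) \<and>
     (\<forall>X\<in>Ob C. idt C X \<in> hom C X X) \<and>
     (\<forall>f\<in>Ar C. \<forall>g\<in>Ar C. cod C f = dom C g \<longrightarrow> cmp C g f \<in> hom C (dom C f) (cod C g)) \<and>
     (\<forall>f\<in>Ar C. cmp C f (idt C (dom C f)) = f \<and> cmp C (idt C (cod C f)) f = f) \<and>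
     (\<forall>f\<in>Ar C. \<forall>g\<in>Ar C. \<forall>h\<in>Ar C. cod C f = dom C g \<and> cod C g = dom C h \<longrightarrow>
        cmp C h (cmp C g f) = cmp C (cmp C h g) f)"

definition preadditive :: "('o,'m) acat \<Rightarrow> bool" where
  "preadditive C \<longleftrightarrow> category C \<and>
     (\<forall>X\<in>Ob C. \<forall>Y\<in>Ob C.
        mzero C X Y \<in> hom C X Y \<and>
        (\<forall>f\<in>hom C X Y. \<forall>g\<in>hom C X Y. madd C f g \<in> hom C X Y \<and> madd C f g = madd C g f) \<and>
        (\<forall>f\<in>hom C X Y. \<forall>g\<in>hom C X Y. \<forall>h\<in>hom C X Y.
            madd C (madd C f g) h = madd C f (madd C g h)) \<and>
        (\<forall>f\<in>hom C X Y. madd C f (mzero C X Y) = f) \<and>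
        (\<forall>f\<in>hom C X Y. \<exists>g\<in>hom C X Y. madd C f g = mzero C X Y)) \<and>
     (\<forall>X\<in>Ob C. \<forall>Y\<in>Ob C. \<forall>Z\<in>Ob C.
        (\<forall>f\<in>hom C X Y. \<forall>f'\<in>hom C X Y. \<forall>g\<in>hom C Y Z.
            cmp C g (madd C f f') = madd C (cmp C g f) (cmp C g f')) \<and>
        (\<forall>f\<in>hom C X Y. \<forall>g\<in>hom C Y Z. \<forall>g'\<in>hom C Y Z.
            cmp C (madd C g g') f = madd C (cmp C g f) (cmp C g' f)))"

definition zero_object :: "('o,'m) acat \<Rightarrow> 'o \<Rightarrow> bool" where
  "zero_object C Z \<longleftrightarrow> Z \<in> Ob C \<and> idt C Z = mzero C Z Z"

definition is_biproduct ::
  "('o,'m) acat \<Rightarrow> 'o \<Rightarrow> 'o \<Rightarrow> 'o \<Rightarrow> 'm \<Rightarrow> 'm \<Rightarrow> 'm \<Rightarrow> 'm \<Rightarrow> bool" where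
  "is_biproduct C X Y P i1 i2 p1 p2 \<longleftrightarrow>
     P \<in> Ob C \<and> i1 \<in> hom C X P \<and> i2 \<in> hom C Y P \<and> p1 \<in> hom C P X \<and> p2 \<in> hom C P Y \<and>
     cmp C p1 i1 = idt C X \<and> cmp C p2 i2 = idt C Y \<and>
     cmp C p2 i1 = mzero C X Y \<and> cmp C p1 i2 = mzero C Y X \<and>
     madd C (cmp C i1 p1) (cmp C i2 p2) = idt C P"

definition is_kernel :: "('o,'m) acat \<Rightarrow> 'm \<Rightarrow> 'm \<Rightarrow> bool" where
  "is_kernel C k f \<longleftrightarrow> k \<in> Ar C \<and> f \<in> Ar C \<and> cod C k = dom C f \<and>
     cmp C f k = mzero C (dom C k) (cod C f) \<and>
     (\<forall>g\<in>Ar C. cod C g = dom C f \<and> cmp C f g = mzero C (dom C g) (cod C f) \<longrightarrow>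
        (\<exists>!h. h \<in> hom C (dom C g) (dom C k) \<and> cmp C k h = g))"

definition is_cokernel :: "('o,'m) acat \<Rightarrow> 'm \<Rightarrow> 'm \<Rightarrow> bool" where
  "is_cokernel C c f \<longleftrightarrow> c \<in> Ar C \<and> f \<in> Ar C \<and> dom C c = cod C f \<and>
     cmp C c f = mzero C (dom C f) (cod C c) \<and>
     (\<forall>g\<in>Ar C. dom C g = cod C f \<and> cmp C g f = mzero C (dom C f) (cod C g) \<longrightarrow>
        (\<exists>!h. h \<in> hom C (cod C c) (cod C g) \<and> cmp C h c = g))"

definition mono :: "('o,'m) acat \<Rightarrow> 'm \<Rightarrow> bool" where
  "mono C f \<longleftrightarrow> f \<in> Ar C \<and> (\<forall>g\<in>Ar C. \<forall>h\<in>Ar C.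
     cod C g = dom C f \<and> cod C h = dom C f \<and> dom C g = dom C h \<and> cmp C f g = cmp C f h \<longrightarrow> g = h)"

definition epi :: "('o,'m) acat \<Rightarrow> 'm \<Rightarrow> bool" where
  "epi C f \<longleftrightarrow> f \<in> Ar C \<and> (\<forall>g\<in>Ar C. \<forall>h\<in>Ar C.
     dom C g = cod C f \<and> dom C h = cod C f \<and> cod C g = cod C h \<and> cmp C g f = cmp C h f \<longrightarrow> g = h)"

definition abelian :: "('o,'m) acat \<Rightarrow> bool" where
  "abelian C \<longleftrightarrow> preadditive C \<and>
     (\<exists>Z. zero_object C Z) \<and>
     (\<forall>X\<in>Ob C. \<forall>Y\<in>Ob C. \<exists>P i1 i2 p1 p2. is_biproduct C X Y P i1 i2 p1 p2) \<and>
     (\<forall>f\<in>Ar C. \<exists>k. is_kernel C k f) \<and>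
     (\<forall>f\<in>Ar C. \<exists>c. is_cokernel C c f) \<and>
     (\<forall>f. mono C f \<longrightarrow> (\<exists>g. is_kernel C f g)) \<and>
     (\<forall>f. epi C f \<longrightarrow> (\<exists>g. is_cokernel C f g))"

definition isomorphic :: "('o,'m) acat \<Rightarrow> 'o \<Rightarrow> 'o \<Rightarrow> bool" where
  "isomorphic C X Y \<longleftrightarrow> (\<exists>f\<in>hom C X Y. \<exists>g\<in>hom C Y X. cmp C g f = idt C X \<and> cmp C f g = idt C Y)"

definition short_exact :: "('o,'m) acat \<Rightarrow> 'o \<Rightarrow> 'o \<Rightarrow> 'o \<Rightarrow> bool" where
  "short_exact C X Y Z \<longleftrightarrow>
     (\<exists>f g. f \<in> hom C X Y \<and> g \<in> hom C Y Z \<and> is_kernel C f g \<and> is_cokernel C g f)"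

section \<open>Subcategories (full, closed under isomorphisms; given by object sets)\<close>

definition iso_closed :: "('o,'m) acat \<Rightarrow> 'o set \<Rightarrow> bool" where
  "iso_closed C S \<longleftrightarrow> (\<forall>X\<in>S. \<forall>Y. isomorphic C X Y \<longrightarrow> Y \<in> S)"

definition additive_subcat :: "('o,'m) acat \<Rightarrow> 'o set \<Rightarrow> bool" where
  "additive_subcat C S \<longleftrightarrow> S \<subseteq> Ob C \<and> iso_closed C S \<and>
     (\<exists>Z\<in>S. zero_object C Z) \<and>
     (\<forall>X\<in>S. \<forall>Y\<in>S. \<forall>P i1 i2 p1 p2. is_biproduct C X Y P i1 i2 p1 p2 \<longrightarrow> P \<in> S)"

text \<open>Exact category: additive full subcategory of an abelian category closed under extensions.\<close>
definition exact_subcat :: "('o,'m) acat \<Rightarrow> 'o set \<Rightarrow> bool" where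
  "exact_subcat C E \<longleftrightarrow> additive_subcat C E \<and>
     (\<forall>X Y Z. X \<in> E \<and> Z \<in> E \<and> short_exact C X Y Z \<longrightarrow> Y \<in> E)"

definition conflation :: "('o,'m) acat \<Rightarrow> 'o set \<Rightarrow> 'o \<Rightarrow> 'o \<Rightarrow> 'o \<Rightarrow> bool" where
  "conflation C E X Y Z \<longleftrightarrow> X \<in> E \<and> Y \<in> E \<and> Z \<in> E \<and> short_exact C X Y Z"

definition serre_subcat :: "('o,'m) acat \<Rightarrow> 'o set \<Rightarrow> 'o set \<Rightarrow> bool" where
  "serre_subcat C E S \<longleftrightarrow> S \<subseteq> E \<and> additive_subcat C S \<and>
     (\<forall>X Y Z. conflation C E X Y Z \<longrightarrow> (Y \<in> S \<longleftrightarrow> X \<in> S \<and> Z \<in> S))"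

definition Serre :: "('o,'m) acat \<Rightarrow> 'o set \<Rightarrow> 'o set set" where
  "Serre C E = {S. serre_subcat C E S}"

section \<open>Grothendieck monoid (standard construction: free commutative monoid on
  objects modulo the congruence generated by [0] = 0 and [Y] = [X] + [Z])\<close>

inductive_set gcong :: "('o,'m) acat \<Rightarrow> 'o set \<Rightarrow> ('o multiset \<times> 'o multiset) set"
  for C E where
  refl:  "set_mset a \<subseteq> E \<Longrightarrow> (a, a) \<in> gcong C E"
| sym:   "(a, b) \<in> gcong C E \<Longrightarrow> (b, a) \<in> gcong C E"
| trans: "(a, b) \<in> gcong C E \<Longrightarrow> (b, c) \<in> gcong C E \<Longrightarrow> (a, c) \<in> gcong C E"
| add:   "(a, b) \<in> gcong C E \<Longrightarrow> set_mset c \<subseteq> E \<Longrightarrow> (a + c, b + c) \<in> gcong C E"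
| zero:  "Z \<in> E \<Longrightarrow> zero_object C Z \<Longrightarrow> ({#Z#}, {#}) \<in> gcong C E"
| conf:  "conflation C E X Y Z \<Longrightarrow> ({#Y#}, {#X, Z#}) \<in> gcong C E"

definition GM_car :: "('o,'m) acat \<Rightarrow> 'o set \<Rightarrow> 'o multiset set set" where
  "GM_car C E = {gcong C E `` {a} | a. set_mset a \<subseteq> E}"

definition GM_add :: "('o,'m) acat \<Rightarrow> 'o set \<Rightarrow> 'o multiset set \<Rightarrow> 'o multiset set \<Rightarrow> 'o multiset set" where
  "GM_add C E u v = {c. \<exists>a\<in>u. \<exists>b\<in>v. (a + b, c) \<in> gcong C E}"

definition GM_zero :: "('o,'m) acat \<Rightarrow> 'o set \<Rightarrow> 'o multiset set" where
  "GM_zero C E = gcong C E `` {{#}}"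

definition gcls :: "('o,'m) acat \<Rightarrow> 'o set \<Rightarrow> 'o \<Rightarrow> 'o multiset set" where
  "gcls C E X = gcong C E `` {{#X#}}"

definition is_face :: "'a set \<Rightarrow> ('a \<Rightarrow> 'a \<Rightarrow> 'a) \<Rightarrow> 'a \<Rightarrow> 'a set \<Rightarrow> bool" where
  "is_face M pl z F \<longleftrightarrow> F \<subseteq> M \<and> z \<in> F \<and>
     (\<forall>x\<in>M. \<forall>y\<in>M. pl x y \<in> F \<longleftrightarrow> x \<in> F \<and> y \<in> F)"

definition is_prime_ideal :: "'a set \<Rightarrow> ('a \<Rightarrow> 'a \<Rightarrow> 'a) \<Rightarrow> 'a set \<Rightarrow> bool" where
  "is_prime_ideal M pl p \<longleftrightarrow> p \<subseteq> M \<and> p \<noteq> M \<and>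
     (\<forall>x\<in>p. \<forall>a\<in>M. pl x a \<in> p) \<and>
     (\<forall>x\<in>M. \<forall>y\<in>M. pl x y \<in> p \<longrightarrow> x \<in> p \<or> y \<in> p)"

definition Face_GM :: "('o,'m) acat \<Rightarrow> 'o set \<Rightarrow> 'o multiset set set set" where
  "Face_GM C E = {F. is_face (GM_car C E) (GM_add C E) (GM_zero C E) F}"

definition MSpec_GM :: "('o,'m) acat \<Rightarrow> 'o set \<Rightarrow> 'o multiset set set set" where
  "MSpec_GM C E = {p. is_prime_ideal (GM_car C E) (GM_add C E) p}"

definition M_of :: "('o,'m) acat \<Rightarrow> 'o set \<Rightarrow> 'o set \<Rightarrow> 'o multiset set set" where
  "M_of C E S = gcls C E ` S"

definition D_of :: "('o,'m) acat \<Rightarrow> 'o set \<Rightarrow> 'o multiset set set \<Rightarrow> 'o set" where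
  "D_of C E F = {X \<in> E. gcls C E X \<in> F}"

end

theory Submission
  imports Defs
begin

context
  fixes C :: "('o,'m) acat"
  assumes pre: "preadditive C"
begin

lemma cat: "category C" using pre unfolding preadditive_def by blast

lemma hom_ob: "f \<in> hom C X Y \<Longrightarrow> X \<in> Ob C \<and> Y \<in> Ob C \<and> f \<in> Ar C"
  using cat unfolding category_def hom_def by blast

lemma ar_hom: "f \<in> Ar C \<Longrightarrow> f \<in> hom C (dom C f) (cod C f)"
  unfolding hom_def by blast

lemma idt_hom: "X \<in> Ob C \<Longrightarrow> idt C X \<in> hom C X X"
  using cat unfolding category_def by blast

lemma cmp_hom: "f \<in> hom C X Y \<Longrightarrow> g \<in> hom C Y Z \<Longrightarrow> cmp C g f \<in> hom C X Z"
  using cat unfolding category_def hom_def by (metis (mono_tags, lifting) mem_Collect_eq)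

lemma id_r: "f \<in> hom C X Y \<Longrightarrow> cmp C f (idt C X) = f"
  using cat unfolding category_def hom_def by blast

lemma id_l: "f \<in> hom C X Y \<Longrightarrow> cmp C (idt C Y) f = f"
  using cat unfolding category_def hom_def by blast

lemma assoc: "f \<in> hom C X Y \<Longrightarrow> g \<in> hom C Y Z \<Longrightarrow> h \<in> hom C Z W \<Longrightarrow>
   cmp C h (cmp C g f) = cmp C (cmp C h g) f"
  using cat unfolding category_def hom_def by (metis (mono_tags, lifting) mem_Collect_eq)

lemma zero_hom: "X \<in> Ob C \<Longrightarrow> Y \<in> Ob C \<Longrightarrow> mzero C X Y \<in> hom C X Y"
  using pre unfolding preadditive_def by blast

lemma madd_hom: "f \<in> hom C X Y \<Longrightarrow> g \<in> hom C X Y \<Longrightarrow> madd C f g \<in> hom C X Y"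
  using pre hom_ob unfolding preadditive_def by blast

lemma madd_comm: "f \<in> hom C X Y \<Longrightarrow> g \<in> hom C X Y \<Longrightarrow> madd C f g = madd C g f"
  using pre hom_ob unfolding preadditive_def by blast

lemma madd_assoc: "f \<in> hom C X Y \<Longrightarrow> g \<in> hom C X Y \<Longrightarrow> h \<in> hom C X Y \<Longrightarrow>
   madd C (madd C f g) h = madd C f (madd C g h)"
  using pre hom_ob unfolding preadditive_def by blast

lemma madd_zero: "f \<in> hom C X Y \<Longrightarrow> madd C f (mzero C X Y) = f"
  using pre hom_ob unfolding preadditive_def by blast

lemma madd_zero_l: "f \<in> hom C X Y \<Longrightarrow> madd C (mzero C X Y) f = f"
  using madd_zero madd_comm zero_hom hom_ob by metis

lemma madd_inv: "f \<in> hom C X Y \<Longrightarrow> \<exists>g\<in>hom C X Y. madd C f g = mzero C X Y"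
  using pre hom_ob unfolding preadditive_def by blast

lemma distl: "f \<in> hom C X Y \<Longrightarrow> f' \<in> hom C X Y \<Longrightarrow> g \<in> hom C Y Z \<Longrightarrow>
   cmp C g (madd C f f') = madd C (cmp C g f) (cmp C g f')"
  using pre hom_ob unfolding preadditive_def by blast

lemma distr: "f \<in> hom C X Y \<Longrightarrow> g \<in> hom C Y Z \<Longrightarrow> g' \<in> hom C Y Z \<Longrightarrow>
   cmp C (madd C g g') f = madd C (cmp C g f) (cmp C g' f)"
  using pre hom_ob unfolding preadditive_def by blast

lemma idem_zero: assumes h: "h \<in> hom C X Z" and e: "h = madd C h h" shows "h = mzero C X Z"
proof -
  obtain k where k: "k \<in> hom C X Z" "madd C h k = mzero C X Z" using madd_inv[OF h] by blast
  have "mzero C X Z = madd C (madd C h h) k" using k e by simp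
  also have "\<dots> = madd C h (madd C h k)" using madd_assoc h k by blast
  also have "\<dots> = h" using k madd_zero h by simp
  finally show ?thesis by simp
qed

lemma cmp_zero_r: assumes g: "g \<in> hom C Y Z" and X: "X \<in> Ob C"
  shows "cmp C g (mzero C X Y) = mzero C X Z"
proof -
  have Y: "Y \<in> Ob C" using g hom_ob by blast
  have z: "mzero C X Y \<in> hom C X Y" using zero_hom X Y by blast
  have "cmp C g (mzero C X Y) = cmp C g (madd C (mzero C X Y) (mzero C X Y))"
    using madd_zero[OF z] by simp
  also have "\<dots> = madd C (cmp C g (mzero C X Y)) (cmp C g (mzero C X Y))"
    using distl z g by blast
  finally show ?thesis using idem_zero cmp_hom z g by blast
qed

lemma cmp_zero_l: assumes f: "f \<in> hom C X Y" and Z: "Z \<in> Ob C"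
  shows "cmp C (mzero C Y Z) f = mzero C X Z"
proof -
  have Y: "Y \<in> Ob C" using f hom_ob by blast
  have z: "mzero C Y Z \<in> hom C Y Z" using zero_hom Z Y by blast
  have "cmp C (mzero C Y Z) f = cmp C (madd C (mzero C Y Z) (mzero C Y Z)) f"
    using madd_zero[OF z] by simp
  also have "\<dots> = madd C (cmp C (mzero C Y Z) f) (cmp C (mzero C Y Z) f)"
    using distr z f by blast
  finally show ?thesis using idem_zero cmp_hom z f by blast
qed

lemma zero_obj_out: assumes Z: "zero_object C Z" and f: "f \<in> hom C Z W" shows "f = mzero C Z W"
proof -
  have "f = cmp C f (idt C Z)" using id_r f by simp
  also have "\<dots> = cmp C f (mzero C Z Z)" using Z unfolding zero_object_def by simp
  also have "\<dots> = mzero C Z W" using cmp_zero_r f Z unfolding zero_object_def by blast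
  finally show ?thesis .
qed

lemma zero_iso: assumes Z: "zero_object C Z" and Z': "zero_object C Z'" shows "isomorphic C Z Z'"
proof -
  have o: "Z \<in> Ob C" "Z' \<in> Ob C" using Z Z' unfolding zero_object_def by auto
  show ?thesis unfolding isomorphic_def
    apply (rule bexI[of _ "mzero C Z Z'"], rule bexI[of _ "mzero C Z' Z"])
    using cmp_zero_l zero_hom o Z Z' unfolding zero_object_def by auto
qed

lemma biprod_se: assumes b: "is_biproduct C X Y P i1 i2 p1 p2" shows "short_exact C X P Y"
proof -
  have i1: "i1 \<in> hom C X P" and i2: "i2 \<in> hom C Y P" and p1: "p1 \<in> hom C P X"
    and p2: "p2 \<in> hom C P Y" and e1: "cmp C p1 i1 = idt C X" and e2: "cmp C p2 i2 = idt C Y"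
    and e3: "cmp C p2 i1 = mzero C X Y" and e4: "cmp C p1 i2 = mzero C Y X"
    and e5: "madd C (cmp C i1 p1) (cmp C i2 p2) = idt C P"
    using b unfolding is_biproduct_def by auto
  have ob: "X \<in> Ob C" "Y \<in> Ob C" "P \<in> Ob C" using i1 i2 hom_ob by auto
  have ip1: "cmp C i1 p1 \<in> hom C P P" and ip2: "cmp C i2 p2 \<in> hom C P P"
    using cmp_hom i1 p1 i2 p2 by auto
  have ker: "is_kernel C i1 p2"
    unfolding is_kernel_def
  proof (intro conjI ballI impI)
    show "i1 \<in> Ar C" "p2 \<in> Ar C" using i1 p2 hom_ob by auto
    show "cod C i1 = dom C p2" "cmp C p2 i1 = mzero C (dom C i1) (cod C p2)"
      using i1 p2 e3 unfolding hom_def by auto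
    fix h assume h: "h \<in> Ar C" and hh: "cod C h = dom C p2 \<and> cmp C p2 h = mzero C (dom C h) (cod C p2)"
    define W where "W = dom C h"
    have hW: "h \<in> hom C W P" using h hh p2 unfolding W_def hom_def by auto
    have W: "W \<in> Ob C" using hW hom_ob by auto
    have hz: "cmp C p2 h = mzero C W Y" using hh p2 unfolding W_def hom_def by auto
    have "h = cmp C (idt C P) h" using id_l hW by simp
    also have "\<dots> = madd C (cmp C (cmp C i1 p1) h) (cmp C (cmp C i2 p2) h)"
      using e5 distr hW ip1 ip2 by metis
    also have "cmp C (cmp C i2 p2) h = mzero C W P"
      using assoc[OF hW p2 i2] hz cmp_zero_r[OF i2 W] by simp
    also have "madd C (cmp C (cmp C i1 p1) h) (mzero C W P) = cmp C (cmp C i1 p1) h"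
      using madd_zero cmp_hom hW ip1 by blast
    also have "\<dots> = cmp C i1 (cmp C p1 h)" using assoc[OF hW p1 i1] by simp
    finally have hq: "h = cmp C i1 (cmp C p1 h)" .
    show "\<exists>!k. k \<in> hom C (dom C h) (dom C i1) \<and> cmp C i1 k = h"
    proof (rule ex1I[of _ "cmp C p1 h"])
      show "cmp C p1 h \<in> hom C (dom C h) (dom C i1) \<and> cmp C i1 (cmp C p1 h) = h"
        using cmp_hom[OF hW p1] hq i1 unfolding W_def hom_def by auto
    next
      fix k assume k: "k \<in> hom C (dom C h) (dom C i1) \<and> cmp C i1 k = h"
      hence kW: "k \<in> hom C W X" using i1 unfolding W_def hom_def by auto
      have "cmp C p1 h = cmp C (cmp C p1 i1) k" using k assoc[OF kW i1 p1] by simp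
      also have "\<dots> = k" using e1 id_l kW by simp
      finally show "k = cmp C p1 h" by simp
    qed
  qed
  have cok: "is_cokernel C p2 i1"
    unfolding is_cokernel_def
  proof (intro conjI ballI impI)
    show "i1 \<in> Ar C" "p2 \<in> Ar C" using i1 p2 hom_ob by auto
    show "dom C p2 = cod C i1" "cmp C p2 i1 = mzero C (dom C i1) (cod C p2)"
      using i1 p2 e3 unfolding hom_def by auto
    fix h assume h: "h \<in> Ar C" and hh: "dom C h = cod C i1 \<and> cmp C h i1 = mzero C (dom C i1) (cod C h)"
    define W where "W = cod C h"
    have hW: "h \<in> hom C P W" using h hh i1 unfolding W_def hom_def by auto
    have W: "W \<in> Ob C" using hW hom_ob by auto
    have hz: "cmp C h i1 = mzero C X W" using hh i1 unfolding W_def hom_def by auto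
    have "h = cmp C h (idt C P)" using id_r hW by simp
    also have "\<dots> = madd C (cmp C h (cmp C i1 p1)) (cmp C h (cmp C i2 p2))"
      using e5 distl hW ip1 ip2 by metis
    also have "cmp C h (cmp C i1 p1) = mzero C P W"
      using assoc[OF p1 i1 hW] hz cmp_zero_l[OF p1 W] by simp
    also have "madd C (mzero C P W) (cmp C h (cmp C i2 p2)) = cmp C h (cmp C i2 p2)"
      using madd_zero_l cmp_hom hW ip2 by blast
    also have "\<dots> = cmp C (cmp C h i2) p2" using assoc[OF p2 i2 hW] by simp
    finally have hq: "h = cmp C (cmp C h i2) p2" .
    show "\<exists>!k. k \<in> hom C (cod C p2) (cod C h) \<and> cmp C k p2 = h"
    proof (rule ex1I[of _ "cmp C h i2"])
      show "cmp C h i2 \<in> hom C (cod C p2) (cod C h) \<and> cmp C (cmp C h i2) p2 = h"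
        using cmp_hom[OF i2 hW] hq p2 unfolding W_def hom_def by auto
    next
      fix k assume k: "k \<in> hom C (cod C p2) (cod C h) \<and> cmp C k p2 = h"
      hence kW: "k \<in> hom C Y W" using p2 unfolding W_def hom_def by auto
      have "cmp C h i2 = cmp C k (cmp C p2 i2)" using k assoc[OF i2 p2 kW] by simp
      also have "\<dots> = k" using e2 id_r kW by simp
      finally show "k = cmp C h i2" by simp
    qed
  qed
  show ?thesis unfolding short_exact_def using i1 p2 ker cok by blast
qed

lemma iso_biprod: assumes iso: "isomorphic C X Y" and Z: "zero_object C Z"
  shows "\<exists>i1 i2 p1 p2. is_biproduct C X Z Y i1 i2 p1 p2"
proof -
  obtain f g where f: "f \<in> hom C X Y" and g: "g \<in> hom C Y X" and gf: "cmp C g f = idt C X"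
    and fg: "cmp C f g = idt C Y" using iso unfolding isomorphic_def by blast
  have ob: "X \<in> Ob C" "Y \<in> Ob C" "Z \<in> Ob C" using f hom_ob Z unfolding zero_object_def by auto
  have "is_biproduct C X Z Y f (mzero C Z Y) g (mzero C Y Z)"
    unfolding is_biproduct_def
    using f g gf fg ob zero_hom cmp_zero_l[OF zero_hom[of Z Y]] cmp_zero_r[OF g] cmp_zero_l[OF f]
      Z madd_zero[OF idt_hom[of Y]] cmp_zero_l[OF zero_hom[of Y Z], of Y]
    unfolding zero_object_def by auto
  thus ?thesis by blast
qed

end


lemma gcong_field: "(a, b) \<in> gcong C E \<Longrightarrow> set_mset a \<subseteq> E \<and> set_mset b \<subseteq> E"
  by (induction rule: gcong.induct) (auto simp: conflation_def)

lemma gcong_add2: "(a, a') \<in> gcong C E \<Longrightarrow> (b, b') \<in> gcong C E \<Longrightarrow> (a + b, a' + b') \<in> gcong C E"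
proof -
  assume A: "(a, a') \<in> gcong C E" and B: "(b, b') \<in> gcong C E"
  have 1: "(a + b, a' + b) \<in> gcong C E" using gcong.add[OF A] gcong_field[OF B] by blast
  have "(b + a', b' + a') \<in> gcong C E" using gcong.add[OF B] gcong_field[OF A] by blast
  hence "(a' + b, a' + b') \<in> gcong C E" by (simp add: add.commute)
  thus ?thesis using 1 gcong.trans by blast
qed

lemma cls_eq: "set_mset a \<subseteq> E \<Longrightarrow> set_mset b \<subseteq> E \<Longrightarrow>
   gcong C E `` {a} = gcong C E `` {b} \<longleftrightarrow> (a, b) \<in> gcong C E"
proof
  assume b: "set_mset b \<subseteq> E" and e: "gcong C E `` {a} = gcong C E `` {b}"
  have "b \<in> gcong C E `` {b}" using gcong.refl[OF b] by blast
  thus "(a, b) \<in> gcong C E" using e by blast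
next
  assume ab: "(a, b) \<in> gcong C E"
  show "gcong C E `` {a} = gcong C E `` {b}"
    using ab gcong.trans gcong.sym by blast
qed

lemma GM_add_cls: assumes "set_mset a \<subseteq> E" "set_mset b \<subseteq> E"
  shows "GM_add C E (gcong C E `` {a}) (gcong C E `` {b}) = gcong C E `` {a + b}"
proof
  show "GM_add C E (gcong C E `` {a}) (gcong C E `` {b}) \<subseteq> gcong C E `` {a + b}"
    unfolding GM_add_def using gcong_add2 gcong.trans by blast
  show "gcong C E `` {a + b} \<subseteq> GM_add C E (gcong C E `` {a}) (gcong C E `` {b})"
    unfolding GM_add_def using gcong.refl assms by blast
qed

lemma conf_cls: "conflation C E X Y Z \<Longrightarrow>
   gcls C E Y = GM_add C E (gcls C E X) (gcls C E Z)"
proof -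
  assume c: "conflation C E X Y Z"
  hence E: "X \<in> E" "Y \<in> E" "Z \<in> E" unfolding conflation_def by auto
  have "GM_add C E (gcls C E X) (gcls C E Z) = gcong C E `` {{#X#} + {#Z#}}"
    unfolding gcls_def using GM_add_cls[of "{#X#}" E "{#Z#}" C] E by simp
  also have "\<dots> = gcls C E Y" unfolding gcls_def
    using cls_eq[of "{#X#} + {#Z#}" E "{#Y#}" C] E gcong.sym[OF gcong.conf[OF c]] by (simp add: add_mset_commute)
  finally show ?thesis by simp
qed

lemma zero_cls: "Z \<in> E \<Longrightarrow> zero_object C Z \<Longrightarrow> gcls C E Z = GM_zero C E"
  unfolding gcls_def GM_zero_def using cls_eq[of "{#Z#}" E "{#}" C] gcong.zero by simp

lemma serre_zero: assumes ab: "abelian C" and S: "serre_subcat C E S" and Z: "Z \<in> E" "zero_object C Z"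
  shows "Z \<in> S"
proof -
  have pre: "preadditive C" using ab unfolding abelian_def by blast
  obtain Z0 where "Z0 \<in> S" "zero_object C Z0" using S unfolding serre_subcat_def additive_subcat_def by blast
  moreover have "iso_closed C S" using S unfolding serre_subcat_def additive_subcat_def by blast
  ultimately show ?thesis using zero_iso[OF pre] Z unfolding iso_closed_def by blast
qed

lemma serre_inv: assumes ab: "abelian C" and S: "serre_subcat C E S"
  shows "(a, b) \<in> gcong C E \<Longrightarrow> (set_mset a \<subseteq> S \<longleftrightarrow> set_mset b \<subseteq> S)"
proof (induction rule: gcong.induct)
  case (zero Z) thus ?case using serre_zero[OF ab S] by simp
next
  case (conf X Y Z) thus ?case using S unfolding serre_subcat_def by simp
qed auto

lemma serre_cls: assumes ab: "abelian C" and S: "serre_subcat C E S"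
  and X: "X \<in> E" and Y: "Y \<in> E" and e: "gcls C E X = gcls C E Y"
  shows "X \<in> S \<longleftrightarrow> Y \<in> S"
proof -
  have "({#X#}, {#Y#}) \<in> gcong C E" using e X Y cls_eq[of "{#X#}" E "{#Y#}" C]
    unfolding gcls_def by simp
  from serre_inv[OF ab S this] show ?thesis by simp
qed


context
  fixes C :: "('o,'m) acat" and E :: "'o set"
  assumes ab: "abelian C" and ex: "exact_subcat C E"
begin

lemma pre': "preadditive C" using ab unfolding abelian_def by blast

lemma EOb: "E \<subseteq> Ob C" using ex unfolding exact_subcat_def additive_subcat_def by blast

lemma Eiso: "iso_closed C E" using ex unfolding exact_subcat_def additive_subcat_def by blast

lemma Ezero: "\<exists>Z\<in>E. zero_object C Z" using ex unfolding exact_subcat_def additive_subcat_def by blast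

lemma Ebip: "\<forall>X\<in>E. \<forall>Y\<in>E. \<forall>P i1 i2 p1 p2. is_biproduct C X Y P i1 i2 p1 p2 \<longrightarrow> P \<in> E"
  using ex unfolding exact_subcat_def additive_subcat_def by (elim conjE) assumption

lemma biprod_E: "X \<in> E \<Longrightarrow> Y \<in> E \<Longrightarrow> is_biproduct C X Y P i1 i2 p1 p2 \<Longrightarrow> conflation C E X P Y"
  unfolding conflation_def using Ebip biprod_se[OF pre'] by blast

lemma conf_ex: assumes "X \<in> E" "Y \<in> E" shows "\<exists>P. conflation C E X P Y"
proof -
  have "\<forall>X\<in>Ob C. \<forall>Y\<in>Ob C. \<exists>P i1 i2 p1 p2. is_biproduct C X Y P i1 i2 p1 p2"
    using ab unfolding abelian_def by (elim conjE) assumption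
  moreover have "X \<in> Ob C" "Y \<in> Ob C" using assms EOb by auto
  ultimately obtain P i1 i2 p1 p2 where "is_biproduct C X Y P i1 i2 p1 p2" by blast
  thus ?thesis using biprod_E assms by blast
qed

lemma rep: "set_mset a \<subseteq> E \<Longrightarrow> \<exists>X\<in>E. (a, {#X#}) \<in> gcong C E"
proof (induction a)
  case empty
  obtain Z where "Z \<in> E" "zero_object C Z" using Ezero by blast
  hence "({#}, {#Z#}) \<in> gcong C E" by (rule gcong.sym[OF gcong.zero])
  thus ?case using \<open>Z \<in> E\<close> by blast
next
  case (add x a)
  have x: "x \<in> E" and aE: "set_mset a \<subseteq> E" using add.prems by auto
  obtain W where W: "W \<in> E" "(a, {#W#}) \<in> gcong C E" using add.IH[OF aE] by blast
  have 1: "(a + {#x#}, {#W#} + {#x#}) \<in> gcong C E" by (rule gcong.add[OF W(2)]) (use x in simp)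
  obtain P where P: "conflation C E W P x" using conf_ex W x by blast
  have "({#W#} + {#x#}, {#P#}) \<in> gcong C E" using gcong.sym[OF gcong.conf[OF P]] by (simp add: add_mset_commute)
  hence "(a + {#x#}, {#P#}) \<in> gcong C E" by (rule gcong.trans[OF 1])
  hence "(add_mset x a, {#P#}) \<in> gcong C E" by simp
  moreover have "P \<in> E" using P unfolding conflation_def by blast
  ultimately show ?case by blast
qed

lemma car_iff: "u \<in> GM_car C E \<longleftrightarrow> (\<exists>X\<in>E. u = gcls C E X)"
proof
  assume "u \<in> GM_car C E"
  then obtain a where a: "set_mset a \<subseteq> E" "u = gcong C E `` {a}" unfolding GM_car_def by blast
  obtain X where "X \<in> E" "(a, {#X#}) \<in> gcong C E" using rep[OF a(1)] by blast
  thus "\<exists>X\<in>E. u = gcls C E X" using a cls_eq[of a E "{#X#}" C] unfolding gcls_def by auto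
next
  assume "\<exists>X\<in>E. u = gcls C E X"
  then obtain X where "X \<in> E" "u = gcls C E X" by blast
  hence "set_mset {#X#} \<subseteq> E" "u = gcong C E `` {{#X#}}" unfolding gcls_def by auto
  thus "u \<in> GM_car C E" unfolding GM_car_def by blast
qed

lemma cls_car: "X \<in> E \<Longrightarrow> gcls C E X \<in> GM_car C E" using car_iff by blast

lemma gz_car: "GM_zero C E \<in> GM_car C E"
proof -
  obtain Z where Z: "Z \<in> E" "zero_object C Z" using Ezero by blast
  have "GM_zero C E = gcls C E Z" using zero_cls[OF Z] by simp
  thus ?thesis using cls_car[OF Z(1)] by simp
qed

lemma add_car: assumes "u \<in> GM_car C E" "v \<in> GM_car C E" shows "GM_add C E u v \<in> GM_car C E"
proof -
  obtain X where X: "X \<in> E" "u = gcls C E X" using assms(1) car_iff by blast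
  obtain Y where Y: "Y \<in> E" "v = gcls C E Y" using assms(2) car_iff by blast
  obtain P where P: "conflation C E X P Y" using conf_ex X Y by blast
  have "GM_add C E u v = gcls C E P" using conf_cls[OF P] X Y by simp
  moreover have "P \<in> E" using P unfolding conflation_def by blast
  ultimately show ?thesis using cls_car by simp
qed

lemma add_comm: assumes "u \<in> GM_car C E" "v \<in> GM_car C E" shows "GM_add C E u v = GM_add C E v u"
proof -
  obtain X where X: "X \<in> E" "u = gcls C E X" using assms(1) car_iff by blast
  obtain Y where Y: "Y \<in> E" "v = gcls C E Y" using assms(2) car_iff by blast
  from X Y show ?thesis unfolding gcls_def using GM_add_cls[of "{#X#}" E "{#Y#}" C] GM_add_cls[of "{#Y#}" E "{#X#}" C]
    by (simp add: add_mset_commute)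
qed

lemma add_zero: assumes "u \<in> GM_car C E" shows "GM_add C E (GM_zero C E) u = u"
proof -
  obtain X where "X \<in> E" "u = gcls C E X" using assms car_iff by blast
  thus ?thesis unfolding gcls_def GM_zero_def using GM_add_cls[of "{#}" E "{#X#}" C] by simp
qed

lemma iso_cls: assumes X: "X \<in> E" and iso: "isomorphic C X Y" shows "Y \<in> E \<and> gcls C E Y = gcls C E X"
proof -
  have Y: "Y \<in> E" using Eiso X iso unfolding iso_closed_def by blast
  obtain Z where Z: "Z \<in> E" "zero_object C Z" using Ezero by blast
  obtain i1 i2 p1 p2 where "is_biproduct C X Z Y i1 i2 p1 p2" using iso_biprod[OF pre' iso Z(2)] by blast
  hence "conflation C E X Y Z" using biprod_E X Z by blast
  hence "gcls C E Y = GM_add C E (gcls C E X) (GM_zero C E)" using conf_cls zero_cls[OF Z] by metis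
  also have "\<dots> = GM_add C E (GM_zero C E) (gcls C E X)" using add_comm[OF cls_car[OF X] gz_car] .
  also have "\<dots> = gcls C E X" using add_zero[OF cls_car[OF X]] .
  finally show ?thesis using Y by simp
qed


lemma mem_M: assumes S: "serre_subcat C E S" and X: "X \<in> E"
  shows "gcls C E X \<in> M_of C E S \<longleftrightarrow> X \<in> S"
proof
  assume "gcls C E X \<in> M_of C E S"
  then obtain Y where Y: "Y \<in> S" "gcls C E X = gcls C E Y" unfolding M_of_def by blast
  have "Y \<in> E" using Y S unfolding serre_subcat_def by blast
  thus "X \<in> S" using serre_cls[OF ab S X _ Y(2)] Y by blast
qed (auto simp: M_of_def)

lemma serre_E: "serre_subcat C E S \<Longrightarrow> S \<subseteq> E" unfolding serre_subcat_def by blast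

lemma M_face: assumes S: "serre_subcat C E S" shows "is_face (GM_car C E) (GM_add C E) (GM_zero C E) (M_of C E S)"
  unfolding is_face_def
proof (intro conjI ballI)
  show "M_of C E S \<subseteq> GM_car C E" unfolding M_of_def using cls_car serre_E[OF S] by blast
  obtain Z where Z: "Z \<in> S" "zero_object C Z" using S unfolding serre_subcat_def additive_subcat_def by blast
  have "Z \<in> E" using Z serre_E[OF S] by blast
  thus "GM_zero C E \<in> M_of C E S" using zero_cls Z unfolding M_of_def by (metis image_eqI)
  fix x y assume x: "x \<in> GM_car C E" and y: "y \<in> GM_car C E"
  obtain X where X: "X \<in> E" "x = gcls C E X" using x car_iff by blast
  obtain Y where Y: "Y \<in> E" "y = gcls C E Y" using y car_iff by blast
  obtain P where P: "conflation C E X P Y" using conf_ex X Y by blast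
  have PE: "P \<in> E" using P unfolding conflation_def by blast
  have "GM_add C E x y = gcls C E P" using conf_cls[OF P] X Y by simp
  hence "GM_add C E x y \<in> M_of C E S \<longleftrightarrow> P \<in> S" using mem_M[OF S PE] by simp
  also have "\<dots> \<longleftrightarrow> X \<in> S \<and> Y \<in> S" using S P unfolding serre_subcat_def by blast
  also have "\<dots> \<longleftrightarrow> x \<in> M_of C E S \<and> y \<in> M_of C E S" using mem_M[OF S] X Y by simp
  finally show "GM_add C E x y \<in> M_of C E S \<longleftrightarrow> x \<in> M_of C E S \<and> y \<in> M_of C E S" .
qed

lemma D_serre: assumes F: "is_face (GM_car C E) (GM_add C E) (GM_zero C E) F"
  shows "serre_subcat C E (D_of C E F)"
proof -
  have FM: "F \<subseteq> GM_car C E" and z: "GM_zero C E \<in> F"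
    and fc: "\<And>x y. x \<in> GM_car C E \<Longrightarrow> y \<in> GM_car C E \<Longrightarrow> GM_add C E x y \<in> F \<longleftrightarrow> x \<in> F \<and> y \<in> F"
    using F unfolding is_face_def by auto
  have conf: "Y \<in> D_of C E F \<longleftrightarrow> X \<in> D_of C E F \<and> Z \<in> D_of C E F" if c: "conflation C E X Y Z" for X Y Z
  proof -
    have E: "X \<in> E" "Y \<in> E" "Z \<in> E" using c unfolding conflation_def by auto
    show ?thesis unfolding D_of_def using conf_cls[OF c] fc[OF cls_car cls_car] E by auto
  qed
  have add: "additive_subcat C (D_of C E F)"
    unfolding additive_subcat_def
  proof (intro conjI ballI allI impI)
    show "D_of C E F \<subseteq> Ob C" using EOb unfolding D_of_def by blast
    show "iso_closed C (D_of C E F)" unfolding iso_closed_def D_of_def using iso_cls by auto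
    obtain Z where Z: "Z \<in> E" "zero_object C Z" using Ezero by blast
    thus "\<exists>Z\<in>D_of C E F. zero_object C Z" using zero_cls[OF Z] z unfolding D_of_def by auto
  next
    fix X Y P i1 i2 p1 p2 assume X: "X \<in> D_of C E F" and Y: "Y \<in> D_of C E F"
      and b: "is_biproduct C X Y P i1 i2 p1 p2"
    have "conflation C E X P Y" using biprod_E b X Y unfolding D_of_def by blast
    thus "P \<in> D_of C E F" using conf X Y by blast
  qed
  show ?thesis unfolding serre_subcat_def using add conf by (auto simp: D_of_def)
qed

lemma DM: "serre_subcat C E S \<Longrightarrow> D_of C E (M_of C E S) = S"
  unfolding D_of_def using mem_M serre_E by blast

lemma MD: assumes F: "is_face (GM_car C E) (GM_add C E) (GM_zero C E) F"
  shows "M_of C E (D_of C E F) = F"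
proof -
  have FM: "F \<subseteq> GM_car C E" using F unfolding is_face_def by auto
  show ?thesis
  proof
    show "M_of C E (D_of C E F) \<subseteq> F" unfolding M_of_def D_of_def by blast
    show "F \<subseteq> M_of C E (D_of C E F)"
    proof
      fix u assume u: "u \<in> F"
      then obtain X where "X \<in> E" "u = gcls C E X" using FM car_iff by blast
      thus "u \<in> M_of C E (D_of C E F)" using u unfolding M_of_def D_of_def by blast
    qed
  qed
qed

lemma face_prime: assumes F: "is_face (GM_car C E) (GM_add C E) (GM_zero C E) F"
  shows "is_prime_ideal (GM_car C E) (GM_add C E) (GM_car C E - F)"
  using F gz_car add_car add_comm unfolding is_face_def is_prime_ideal_def by blast

lemma prime_face: assumes p: "is_prime_ideal (GM_car C E) (GM_add C E) p"
  shows "is_face (GM_car C E) (GM_add C E) (GM_zero C E) (GM_car C E - p)"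
proof -
  have pM: "p \<subseteq> GM_car C E" and ne: "p \<noteq> GM_car C E"
    and id: "\<And>x a. x \<in> p \<Longrightarrow> a \<in> GM_car C E \<Longrightarrow> GM_add C E x a \<in> p"
    and pr: "\<And>x y. x \<in> GM_car C E \<Longrightarrow> y \<in> GM_car C E \<Longrightarrow> GM_add C E x y \<in> p \<Longrightarrow> x \<in> p \<or> y \<in> p"
    using p unfolding is_prime_ideal_def by auto
  have zp: "GM_zero C E \<notin> p"
  proof
    assume "GM_zero C E \<in> p"
    obtain a where a: "a \<in> GM_car C E" "a \<notin> p" using pM ne by blast
    have "GM_add C E (GM_zero C E) a \<in> p" using id \<open>GM_zero C E \<in> p\<close> a by blast
    thus False using add_zero a by simp
  qed
  show ?thesis unfolding is_face_def
  proof (intro conjI ballI)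
    show "GM_car C E - p \<subseteq> GM_car C E" by blast
    show "GM_zero C E \<in> GM_car C E - p" using gz_car zp by blast
    fix x y assume x: "x \<in> GM_car C E" and y: "y \<in> GM_car C E"
    show "GM_add C E x y \<in> GM_car C E - p \<longleftrightarrow> x \<in> GM_car C E - p \<and> y \<in> GM_car C E - p"
      using x y pr[OF x y] id[OF _ x] id[OF _ y] add_comm[OF x y] add_car[OF x y] by (metis Diff_iff)
  qed
qed

end


theorem mainTheorem2:
  fixes C :: "('o, 'm) acat" and E :: "'o set"
  assumes "abelian C" and "exact_subcat C E"
  shows "bij_betw (M_of C E) (Serre C E) (Face_GM C E)
    \<and> (\<forall>S\<in>Serre C E. D_of C E (M_of C E S) = S)
    \<and> (\<forall>F\<in>Face_GM C E. D_of C E F \<in> Serre C E \<and> M_of C E (D_of C E F) = F)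
    \<and> (\<forall>S\<in>Serre C E. \<forall>S'\<in>Serre C E. S \<subseteq> S' \<longleftrightarrow> M_of C E S \<subseteq> M_of C E S')
    \<and> (\<forall>F\<in>Face_GM C E. \<forall>G\<in>Face_GM C E. F \<subseteq> G \<longleftrightarrow> D_of C E F \<subseteq> D_of C E G)
    \<and> bij_betw (\<lambda>F. GM_car C E - F) (Face_GM C E) (MSpec_GM C E)
    \<and> (\<forall>F\<in>Face_GM C E. \<forall>G\<in>Face_GM C E. F \<subseteq> G \<longleftrightarrow> GM_car C E - G \<subseteq> GM_car C E - F)
    \<and> bij_betw (\<lambda>S. GM_car C E - M_of C E S) (Serre C E) (MSpec_GM C E)"
proof -
  note ab = assms(1) and ex = assms(2)
  have DM': "\<forall>S\<in>Serre C E. D_of C E (M_of C E S) = S"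
    using DM[OF ab ex] unfolding Serre_def by blast
  have MD': "\<forall>F\<in>Face_GM C E. D_of C E F \<in> Serre C E \<and> M_of C E (D_of C E F) = F"
    using MD[OF ab ex] D_serre[OF ab ex] unfolding Serre_def Face_GM_def by blast
  have Mf: "\<forall>S\<in>Serre C E. M_of C E S \<in> Face_GM C E"
    using M_face[OF ab ex] unfolding Serre_def Face_GM_def by blast
  have b1: "bij_betw (M_of C E) (Serre C E) (Face_GM C E)"
    by (rule bij_betw_byWitness[where f'="D_of C E"]) (use DM' MD' Mf in auto)
  have o1: "\<forall>S\<in>Serre C E. \<forall>S'\<in>Serre C E. S \<subseteq> S' \<longleftrightarrow> M_of C E S \<subseteq> M_of C E S'"
  proof (intro ballI iffI)
    fix S S' assume "S \<in> Serre C E" "S' \<in> Serre C E"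
    { assume "S \<subseteq> S'" thus "M_of C E S \<subseteq> M_of C E S'" unfolding M_of_def by blast }
    { assume "M_of C E S \<subseteq> M_of C E S'"
      hence "D_of C E (M_of C E S) \<subseteq> D_of C E (M_of C E S')" unfolding D_of_def by blast
      thus "S \<subseteq> S'" using DM' \<open>S \<in> Serre C E\<close> \<open>S' \<in> Serre C E\<close> by simp }
  qed
  have o2: "\<forall>F\<in>Face_GM C E. \<forall>G\<in>Face_GM C E. F \<subseteq> G \<longleftrightarrow> D_of C E F \<subseteq> D_of C E G"
  proof (intro ballI iffI)
    fix F G assume "F \<in> Face_GM C E" "G \<in> Face_GM C E"
    { assume "F \<subseteq> G" thus "D_of C E F \<subseteq> D_of C E G" unfolding D_of_def by blast }
    { assume "D_of C E F \<subseteq> D_of C E G"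
      hence "M_of C E (D_of C E F) \<subseteq> M_of C E (D_of C E G)" unfolding M_of_def by blast
      thus "F \<subseteq> G" using MD' \<open>F \<in> Face_GM C E\<close> \<open>G \<in> Face_GM C E\<close> by simp }
  qed
  have FM: "\<forall>F\<in>Face_GM C E. F \<subseteq> GM_car C E" unfolding Face_GM_def is_face_def by blast
  have PM: "\<forall>p\<in>MSpec_GM C E. p \<subseteq> GM_car C E" unfolding MSpec_GM_def is_prime_ideal_def by blast
  have b2: "bij_betw (\<lambda>F. GM_car C E - F) (Face_GM C E) (MSpec_GM C E)"
    by (rule bij_betw_byWitness[where f'="\<lambda>F. GM_car C E - F"])
      (use FM PM face_prime[OF ab ex] prime_face[OF ab ex] in \<open>auto simp: Face_GM_def MSpec_GM_def\<close>)
  have o3: "\<forall>F\<in>Face_GM C E. \<forall>G\<in>Face_GM C E. F \<subseteq> G \<longleftrightarrow> GM_car C E - G \<subseteq> GM_car C E - F"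
    using FM by blast
  have b3: "bij_betw (\<lambda>S. GM_car C E - M_of C E S) (Serre C E) (MSpec_GM C E)"
    using bij_betw_trans[OF b1 b2] by (simp add: comp_def)
  show ?thesis using b1 DM' MD' o1 o2 b2 o3 b3 by blast
qed

end
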